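(* Let $v,\alpha,h\in\mathbb{R}^d$ with $|\alpha|\ge|h|$ and $\alpha\cdot h=0$. Then $$\mu(v-h)\mu(v+\alpha)=\mu(v)\mu(v+\alpha-h)\le\mu^{1/9}(v)\mu^{1/9}(v+\alpha),$$ $$\mu(v-h)\mu(v+\alpha-h)\le\mu^{1/20}(v)\mu^{1/20}(v+\alpha).$$
   Context: $\mu(v)=(2\pi)^{-d/2}e^{-|v|^2/2}$ is the standard Gaussian on $\mathbb{R}^d$. *)

theory Defs
  imports "HOL-Analysis.Analysis"
begin

definition gauss :: "'a::euclidean_space \<Rightarrow> real" where
  "gauss v = (2 * pi) powr (- real DIM('a) / 2) * exp (- (norm v)\<^sup>2 / 2)"

end

theory Submission
  imports Defs
begin

lemma sq_add_le: fixes a b :: "'a::real_normed_vector"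
  shows "(norm (a + b))\<^sup>2 \<le> 2 * (norm a)\<^sup>2 + 2 * (norm b)\<^sup>2"
proof -
  have "norm (a + b) \<le> norm a + norm b" by (rule norm_triangle_ineq)
  hence "(norm (a + b))\<^sup>2 \<le> (norm a + norm b)\<^sup>2"
    by (simp add: power_mono)
  also have "\<dots> \<le> 2 * (norm a)\<^sup>2 + 2 * (norm b)\<^sup>2"
    using zero_le_power2[of "norm a - norm b"] by (simp add: power2_eq_square algebra_simps)
  finally show ?thesis .
qed

lemma gauss_eq: "gauss (v::'a::euclidean_space) = (2 * pi) powr (- real DIM('a) / 2) * exp (- (norm v)\<^sup>2 / 2)"
  by (simp add: gauss_def)

lemma key:
  fixes C x y a b r :: real
  assumes C: "0 < C" "C \<le> 1" and r: "0 < r" "r \<le> 1" and xy: "r * (a + b) \<le> x + y"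
  shows "C * exp (- x / 2) * (C * exp (- y / 2)) \<le> (C * exp (- a / 2)) powr r * (C * exp (- b / 2)) powr r"
proof -
  have "(C * exp (- a / 2)) powr r * (C * exp (- b / 2)) powr r
      = (C powr r * C powr r) * exp (- (r * (a + b)) / 2)"
    using C by (simp add: powr_mult exp_powr_real exp_add[symmetric] algebra_simps add_divide_distrib diff_divide_distrib)
  moreover have m1: "C * C \<le> C powr r * C powr r"
  proof -
    have "C \<le> C powr r" using C r powr_mono2'[of r C 1] 
      by (metis dual_order.refl powr_le_cancel_iff powr_one powr_mono' less_le_not_le)
    thus ?thesis using C by (simp add: mult_mono)
  qed
  moreover have m2: "exp (- x / 2) * exp (- y / 2) \<le> exp (- (r * (a + b)) / 2)"
    using xy by (simp add: exp_add[symmetric])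
  ultimately have "(C * C) * (exp (- x / 2) * exp (- y / 2)) \<le> (C powr r * C powr r) * exp (- (r * (a + b)) / 2)"
    using mult_mono[OF m1 m2] C by simp
  thus ?thesis using \<open>(C * exp (- a / 2)) powr r * (C * exp (- b / 2)) powr r
      = (C powr r * C powr r) * exp (- (r * (a + b)) / 2)\<close> by (simp add: algebra_simps)
qed

lemma lin9: fixes W U H A D V :: real
  assumes "W \<le> 2 * U + 2 * H" "D \<le> 2 * U + 2 * V" "D = A + H" "H \<le> A"
    "0 \<le> V" "0 \<le> U"
  shows "1/9 * (V + W) \<le> V + U"
proof -
  have "V + W \<le> 9 * V + 9 * U" using assms by linarith
  thus ?thesis by simp
qed
lemma lin20: fixes W U H A P V :: real
  assumes "V \<le> 2 * P + 2 * H" "W \<le> 2 * U + 2 * H" "A \<le> 2 * U + 2 * P" "H \<le> A"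
    "0 \<le> P" "0 \<le> U"
  shows "1/20 * (V + W) \<le> P + U"
proof -
  have "V + W \<le> 20 * P + 20 * U" using assms by linarith
  thus ?thesis by simp
qed

theorem lemma3p3:
  fixes v \<alpha> h :: "'a::euclidean_space"
  assumes "norm \<alpha> \<ge> norm h" and "\<alpha> \<bullet> h = 0"
  shows "gauss (v - h) * gauss (v + \<alpha>) = gauss v * gauss (v + \<alpha> - h)
       \<and> gauss v * gauss (v + \<alpha> - h) \<le> gauss v powr (1/9) * gauss (v + \<alpha>) powr (1/9)
       \<and> gauss (v - h) * gauss (v + \<alpha> - h) \<le> gauss v powr (1/20) * gauss (v + \<alpha>) powr (1/20)"
proof -
  define C :: real where "C = (2 * pi) powr (- real DIM('a) / 2)"
  have C: "0 < C" "C \<le> 1" unfolding C_def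
  proof -
    have "1 \<le> (2 * pi) powr (real DIM('a) / 2)" using pi_gt3 by (intro ge_one_powr_ge_zero) auto
    thus "0 < (2 * pi) powr (- real DIM('a) / 2)" "(2 * pi) powr (- real DIM('a) / 2) \<le> 1"
      using pi_gt3 by (auto simp: powr_minus_divide divide_simps)
  qed
  have g: "gauss x = C * exp (- (norm x)\<^sup>2 / 2)" for x :: 'a
    by (simp add: gauss_def C_def)
  have ha: "(norm (\<alpha> - h))\<^sup>2 = (norm \<alpha>)\<^sup>2 + (norm h)\<^sup>2"
    using assms(2) by (simp add: power2_norm_eq_inner inner_diff_left inner_diff_right inner_commute)
  have hh: "(norm h)\<^sup>2 \<le> (norm \<alpha>)\<^sup>2" using assms(1) by (simp add: power_mono)
  have eq: "(norm (v - h))\<^sup>2 + (norm (v + \<alpha>))\<^sup>2 = (norm v)\<^sup>2 + (norm (v + \<alpha> - h))\<^sup>2"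
    using assms(2) by (simp add: power2_norm_eq_inner inner_diff_left inner_diff_right
        inner_add_left inner_add_right inner_commute algebra_simps)
  have 1: "gauss (v - h) * gauss (v + \<alpha>) = gauss v * gauss (v + \<alpha> - h)"
  proof -
    have "exp (- (norm (v - h))\<^sup>2 / 2) * exp (- (norm (v + \<alpha>))\<^sup>2 / 2)
        = exp (- (norm v)\<^sup>2 / 2) * exp (- (norm (v + \<alpha> - h))\<^sup>2 / 2)"
      using eq by (simp add: exp_add[symmetric])
    thus ?thesis unfolding g by (metis mult.assoc mult.left_commute)
  qed
  have 2: "gauss v * gauss (v + \<alpha> - h) \<le> gauss v powr (1/9) * gauss (v + \<alpha>) powr (1/9)"
  proof -
    have a: "(norm (v + \<alpha>))\<^sup>2 \<le> 2 * (norm (v + \<alpha> - h))\<^sup>2 + 2 * (norm h)\<^sup>2"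
      using sq_add_le[of "v + \<alpha> - h" h] by simp
    have b: "(norm (\<alpha> - h))\<^sup>2 \<le> 2 * (norm (v + \<alpha> - h))\<^sup>2 + 2 * (norm v)\<^sup>2"
    proof -
      have "\<alpha> - h = (v + \<alpha> - h) + (- v)" by simp
      hence "(norm (\<alpha> - h))\<^sup>2 = (norm ((v + \<alpha> - h) + (- v)))\<^sup>2" by metis
      also have "\<dots> \<le> 2 * (norm (v + \<alpha> - h))\<^sup>2 + 2 * (norm (-v))\<^sup>2" by (rule sq_add_le)
      finally show ?thesis by simp
    qed
    have "(1/9) * ((norm v)\<^sup>2 + (norm (v + \<alpha>))\<^sup>2) \<le> (norm v)\<^sup>2 + (norm (v + \<alpha> - h))\<^sup>2"
      using lin9[OF a b ha hh] zero_le_power2[of "norm v"] zero_le_power2[of "norm (v + \<alpha> - h)"] by linarith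
    thus ?thesis unfolding g by (intro key C) auto
  qed
  have 3: "gauss (v - h) * gauss (v + \<alpha> - h) \<le> gauss v powr (1/20) * gauss (v + \<alpha>) powr (1/20)"
  proof -
    have a: "(norm v)\<^sup>2 \<le> 2 * (norm (v - h))\<^sup>2 + 2 * (norm h)\<^sup>2"
      using sq_add_le[of "v - h" h] by simp
    have b: "(norm (v + \<alpha>))\<^sup>2 \<le> 2 * (norm (v + \<alpha> - h))\<^sup>2 + 2 * (norm h)\<^sup>2"
      using sq_add_le[of "v + \<alpha> - h" h] by simp
    have c: "(norm \<alpha>)\<^sup>2 \<le> 2 * (norm (v + \<alpha> - h))\<^sup>2 + 2 * (norm (v - h))\<^sup>2"
    proof -
      have "\<alpha> = (v + \<alpha> - h) + (- (v - h))" by simp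
      hence "(norm \<alpha>)\<^sup>2 = (norm ((v + \<alpha> - h) + (- (v - h))))\<^sup>2" by metis
      also have "\<dots> \<le> 2 * (norm (v + \<alpha> - h))\<^sup>2 + 2 * (norm (-(v - h)))\<^sup>2" by (rule sq_add_le)
      finally show ?thesis by (simp only: norm_minus_cancel)
    qed
    have "(1/20) * ((norm v)\<^sup>2 + (norm (v + \<alpha>))\<^sup>2) \<le> (norm (v - h))\<^sup>2 + (norm (v + \<alpha> - h))\<^sup>2"
      using lin20[OF a b c hh] zero_le_power2[of "norm (v - h)"] zero_le_power2[of "norm (v + \<alpha> - h)"] by linarith
    thus ?thesis unfolding g by (intro key C) auto
  qed
  show ?thesis using 1 2 3 by blast
qed

end
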